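(* Let $\mathcal{H}$ be a complex Hilbert space, let $A\in\mathcal{B}(\mathcal{H})$ be positive, let $S\in\mathcal{B}_A(\mathcal{H})$ and let $\alpha\in\mathbb{C}$ with $\alpha\neq 0$. Then $$d\omega_A^2(S)\le \omega_A^2\left(S^{\sharp_A}S+S\right)+\frac{2}{|\alpha|}\,\omega_A\left(S^{\sharp_A}S^2\right)+\frac{\max\{1,|\alpha-1|\}}{|\alpha|}\left\|\left(S^{\sharp_A}S\right)^2+S^{\sharp_A}S\right\|_A .$$
   Context: $\mathcal{B}(\mathcal{H})$ denotes the bounded linear operators on $\mathcal{H}$. For positive $A$, set $\langle x,z\rangle_A=\langle Ax,z\rangle$ and $\|z\|_A=\|A^{1/2}z\|=\sqrt{\langle z,z\rangle_A}$ (a seminorm). $\mathcal{B}_A(\mathcal{H})$ is the set of $S\in\mathcal{B}(\mathcal{H})$ admitting an $A$-adjoint, i.e. for which there is $R\in\mathcal{B}(\mathcal{H})$ with $AR=S^*A$ (equivalently $\mathcal{R}(S^*A)\subseteq\mathcal{R}(A)$). For $S\in\mathcal{B}_A(\mathcal{H})$, $S^{\sharp_A}=A^{\dagger}S^*A$, where $A^\dagger$ is the Moore–Penrose inverse of $A$; it satisfies $AS^{\sharp_A}=S^*A$ and $\mathcal{R}(S^{\sharp_A})\subseteq\overline{\mathcal{R}(A)}$. For operators $T$ with $\|Tz\|_A\le c\|z\|_A$ for all $z$: $\|T\|_A=\sup\{\|Tz\|_A:\|z\|_A=1\}$, $\omega_A(T)=\sup\{|\langle Tz,z\rangle_A|:\|z\|_A=1\}$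 ($A$-numerical radius), and $d\omega_A(T)=\sup\{(|\langle Tz,z\rangle_A|^2+\|Tz\|_A^4)^{1/2}:\|z\|_A=1\}$ ($A$-Davis–Wielandt radius). *)

theory Defs
  imports "HOL-Analysis.Analysis"
begin

class chilbert = ab_group_add +
  fixes scaleC :: "complex \<Rightarrow> 'a \<Rightarrow> 'a" (infixr "*\<^sub>C" 75)
    and cinner :: "'a \<Rightarrow> 'a \<Rightarrow> complex"
  assumes scaleC_add_right: "a *\<^sub>C (x + y) = a *\<^sub>C x + a *\<^sub>C y"
    and scaleC_add_left: "(a + b) *\<^sub>C x = a *\<^sub>C x + b *\<^sub>C x"
    and scaleC_scaleC: "a *\<^sub>C (b *\<^sub>C x) = (a * b) *\<^sub>C x"
    and scaleC_one: "1 *\<^sub>C x = x"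
    and cinner_add_left: "cinner (x + y) z = cinner x z + cinner y z"
    and cinner_scaleC_left: "cinner (a *\<^sub>C x) z = a * cinner x z"
    and cinner_commute: "cinner y x = cnj (cinner x y)"
    and cinner_nonneg: "0 \<le> Re (cinner x x)"
    and cinner_eq_zero: "cinner x x = 0 \<Longrightarrow> x = 0"
    and cinner_complete:
      "(\<forall>e>0. \<exists>N. \<forall>m\<ge>N. \<forall>n\<ge>N. sqrt (Re (cinner (X m - X n) (X m - X n))) < e)
        \<Longrightarrow> \<exists>L. (\<lambda>n. sqrt (Re (cinner (X n - L) (X n - L)))) \<longlonglongrightarrow> 0"

definition hnorm :: "'a::chilbert \<Rightarrow> real" where
  "hnorm x = sqrt (Re (cinner x x))"

definition bop :: "('a::chilbert \<Rightarrow> 'a) \<Rightarrow> bool" where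
  "bop T \<longleftrightarrow> (\<forall>x y. T (x + y) = T x + T y) \<and> (\<forall>a x. T (a *\<^sub>C x) = a *\<^sub>C T x)
     \<and> (\<exists>c. \<forall>x. hnorm (T x) \<le> c * hnorm x)"

definition adj :: "('a::chilbert \<Rightarrow> 'a) \<Rightarrow> ('a \<Rightarrow> 'a)" where
  "adj T = (THE T'. \<forall>x y. cinner (T x) y = cinner x (T' y))"

definition positive_op :: "('a::chilbert \<Rightarrow> 'a) \<Rightarrow> bool" where
  "positive_op A \<longleftrightarrow> bop A \<and> (\<forall>x. Im (cinner (A x) x) = 0 \<and> 0 \<le> Re (cinner (A x) x))"

text \<open>B_A(H): operators admitting an A-adjoint.\<close>
definition BA :: "('a::chilbert \<Rightarrow> 'a) \<Rightarrow> ('a \<Rightarrow> 'a) set" where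
  "BA A = {S. bop S \<and> (\<exists>R. bop R \<and> A \<circ> R = adj S \<circ> A)}"

definition mp_inv :: "('a::chilbert \<Rightarrow> 'a) \<Rightarrow> 'a \<Rightarrow> 'a" where
  "mp_inv A y = (THE x. (\<forall>w. A w = 0 \<longrightarrow> cinner x w = 0) \<and> A x = y)"

definition sharpA :: "('a::chilbert \<Rightarrow> 'a) \<Rightarrow> ('a \<Rightarrow> 'a) \<Rightarrow> ('a \<Rightarrow> 'a)" where
  "sharpA A S = mp_inv A \<circ> adj S \<circ> A"

definition anorm :: "('a::chilbert \<Rightarrow> 'a) \<Rightarrow> 'a \<Rightarrow> real" where
  "anorm A z = sqrt (Re (cinner (A z) z))"

text \<open>Suprema over the A-unit sphere (0 is inserted so that the supremum of the
  empty set, when A = 0, is 0; the values are all nonnegative, so otherwise this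
  is the plain supremum).\<close>

definition A_opnorm :: "('a::chilbert \<Rightarrow> 'a) \<Rightarrow> ('a \<Rightarrow> 'a) \<Rightarrow> real" where
  "A_opnorm A T = Sup (insert 0 ((\<lambda>z. anorm A (T z)) ` {z. anorm A z = 1}))"

definition A_numrad :: "('a::chilbert \<Rightarrow> 'a) \<Rightarrow> ('a \<Rightarrow> 'a) \<Rightarrow> real" where
  "A_numrad A T = Sup (insert 0 ((\<lambda>z. cmod (cinner (A (T z)) z)) ` {z. anorm A z = 1}))"

definition A_dwrad :: "('a::chilbert \<Rightarrow> 'a) \<Rightarrow> ('a \<Rightarrow> 'a) \<Rightarrow> real" where
  "A_dwrad A T = Sup (insert 0 ((\<lambda>z. sqrt ((cmod (cinner (A (T z)) z))\<^sup>2 + (anorm A (T z)) ^ 4))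
                      ` {z. anorm A z = 1}))"

end

theory Submission
  imports Defs
begin


lemma scaleC_zero_left[simp]: "(0::complex) *\<^sub>C (x::'a::chilbert) = 0"
proof -
  have "0 *\<^sub>C x = 0 *\<^sub>C x + 0 *\<^sub>C x" using scaleC_add_left[of 0 0 x] by simp
  then show ?thesis by simp
qed

lemma scaleC_zero_right[simp]: "a *\<^sub>C (0::'a::chilbert) = 0"
proof -
  have "a *\<^sub>C (0::'a) = a *\<^sub>C 0 + a *\<^sub>C 0" using scaleC_add_right[of a 0 0] by simp
  then show ?thesis by simp
qed

lemma scaleC_minus_left: "(- a) *\<^sub>C (x::'a::chilbert) = - (a *\<^sub>C x)"
  using scaleC_add_left[of a "-a" x] by (simp add: eq_neg_iff_add_eq_0 add.commute)

lemma scaleC_minus_right: "a *\<^sub>C (- x::'a::chilbert) = - (a *\<^sub>C x)"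
  using scaleC_add_right[of a x "-x"] by (simp add: eq_neg_iff_add_eq_0 add.commute)

lemma scaleC_diff_right: "a *\<^sub>C (x - y::'a::chilbert) = a *\<^sub>C x - a *\<^sub>C y"
  using scaleC_add_right[of a x "-y"] scaleC_minus_right[of a y] by simp

lemma scaleC_diff_left: "(a - b) *\<^sub>C (x::'a::chilbert) = a *\<^sub>C x - b *\<^sub>C x"
  using scaleC_add_left[of a "-b" x] scaleC_minus_left[of b x] by simp

lemma scaleC_two: "(2::complex) *\<^sub>C (x::'a::chilbert) = x + x"
  using scaleC_add_left[of 1 1 x] by (simp add: scaleC_one)

lemma cnj_mult_self: "cnj k * k = complex_of_real ((cmod k)\<^sup>2)"
  using complex_norm_square[of k] by (simp add: mult.commute)

locale sesq =
  fixes B :: "'a::chilbert \<Rightarrow> 'a \<Rightarrow> complex"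
  assumes add_left: "B (x + y) z = B x z + B y z"
    and scale_left: "B (a *\<^sub>C x) z = a * B x z"
    and herm: "B y x = cnj (B x y)"
    and pos: "0 \<le> Re (B x x)"
begin

lemma zero_left[simp]: "B 0 z = 0"
  using add_left[of 0 0 z] by simp
lemma zero_right[simp]: "B z 0 = 0"
  using herm[of 0 z] by simp
lemma minus_left: "B (- x) z = - B x z"
  using add_left[of x "-x" z] by (simp add: eq_neg_iff_add_eq_0 add.commute)
lemma diff_left: "B (x - y) z = B x z - B y z"
  using add_left[of x "-y" z] minus_left[of y z] by simp
lemma add_right: "B z (x + y) = B z x + B z y"
  using herm[of z "x+y"] herm[of z x] herm[of z y] add_left[of x y z] by simp
lemma scale_right: "B z (a *\<^sub>C x) = cnj a * B z x"
  using herm[of z "a *\<^sub>C x"] herm[of z x] scale_left[of a x z] by simp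
lemma minus_right: "B z (- x) = - B z x"
  using herm[of z "-x"] herm[of z x] minus_left[of x z] by simp
lemma diff_right: "B z (x - y) = B z x - B z y"
  using add_right[of z x "-y"] minus_right[of z y] by simp
lemma im_self: "Im (B x x) = 0"
  using herm[of x x] by (metis cnj.simps(2) complex_cnj_cancel_iff equation_minus_iff neg_equal_zero)
lemma self_real: "B x x = complex_of_real (Re (B x x))"
  using im_self[of x] by (simp add: complex_eq_iff)

lemma expand_re:
  "Re (B (x - k *\<^sub>C y) (x - k *\<^sub>C y)) = Re (B x x) - 2 * Re (cnj k * B x y) + (cmod k)\<^sup>2 * Re (B y y)"
proof -
  have e: "B (x - k *\<^sub>C y) (x - k *\<^sub>C y) = B x x - k * B y x - cnj k * (B x y - k * B y y)"
    by (simp only: diff_left diff_right scale_left scale_right)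
  have r1: "Re (k * B y x) = Re (cnj k * B x y)"
    unfolding herm[of x y] by (metis complex_cnj_cnj complex_cnj_mult cnj.simps(1))
  have kk: "cnj k * k = complex_of_real ((cmod k)\<^sup>2)"
    using complex_norm_square[of k] by (simp add: mult.commute)
  have r2: "Re (cnj k * (k * B y y)) = (cmod k)\<^sup>2 * Re (B y y)"
    unfolding mult.assoc[symmetric] kk by simp
  have "Re (B (x - k *\<^sub>C y) (x - k *\<^sub>C y)) = Re (B x x) - Re (k * B y x) - Re (cnj k * B x y) + Re (cnj k * (k * B y y))"
    unfolding e by (simp only: minus_complex.sel right_diff_distrib)
  then show ?thesis using r1 r2 by simp
qed

lemma cs_sq: "(cmod (B x y))\<^sup>2 \<le> Re (B x x) * Re (B y y)"
proof (cases "Re (B y y) = 0")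
  case True
  have "B x y = 0"
  proof (rule ccontr)
    assume nz: "B x y \<noteq> 0"
    define t :: real where "t = (Re (B x x) + 1) / (2 * (cmod (B x y))\<^sup>2)"
    have c: "(cmod (B x y))\<^sup>2 > 0" using nz by simp
    have "0 \<le> Re (B (x - (t * B x y) *\<^sub>C y) (x - (t * B x y) *\<^sub>C y))" by (rule pos)
    also have "\<dots> = Re (B x x) - 2 * t * (cmod (B x y))\<^sup>2"
    proof -
      have "cnj (complex_of_real t * B x y) * B x y = complex_of_real (t * (cmod (B x y))\<^sup>2)"
        by (simp add: mult.assoc cnj_mult_self)
      then have "Re (cnj (complex_of_real t * B x y) * B x y) = t * (cmod (B x y))\<^sup>2"
        by (simp only: Re_complex_of_real)
      then show ?thesis unfolding expand_re True by simp
    qed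
    also have "2 * t * (cmod (B x y))\<^sup>2 = Re (B x x) + 1"
      unfolding t_def using c by (simp add: field_simps)
    finally show False by simp
  qed
  then show ?thesis using pos[of x] pos[of y] by simp
next
  case False
  then have yp: "Re (B y y) > 0" using pos[of y] by simp
  define k where "k = B x y / complex_of_real (Re (B y y))"
  have "0 \<le> Re (B (x - k *\<^sub>C y) (x - k *\<^sub>C y))" by (rule pos)
  also have "\<dots> = Re (B x x) - (cmod (B x y))\<^sup>2 / Re (B y y)"
  proof -
    define r where "r = Re (B y y)"
    have "cnj k * B x y = complex_of_real ((cmod (B x y))\<^sup>2 / r)"
      unfolding k_def r_def[symmetric] by (simp add: cnj_mult_self)
    then have e1: "Re (cnj k * B x y) = (cmod (B x y))\<^sup>2 / r"
      by (simp only: Re_complex_of_real)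
    have e2: "(cmod k)\<^sup>2 = (cmod (B x y))\<^sup>2 / r\<^sup>2"
      unfolding k_def r_def[symmetric] by (simp add: norm_divide power_divide)
    have rp: "r > 0" using yp r_def by simp
    show ?thesis unfolding expand_re r_def[symmetric] e1 e2 using rp
      by (simp add: power2_eq_square field_simps)
  qed
  finally show ?thesis using yp by (simp add: field_simps)
qed

definition sn :: "'a \<Rightarrow> real" where "sn x = sqrt (Re (B x x))"

lemma sn_nonneg: "0 \<le> sn x" unfolding sn_def using pos[of x] by simp
lemma sn_sq: "(sn x)\<^sup>2 = Re (B x x)" unfolding sn_def using pos[of x] by simp

lemma cs: "cmod (B x y) \<le> sn x * sn y"
proof -
  have "(cmod (B x y))\<^sup>2 \<le> (sn x * sn y)\<^sup>2"
    using cs_sq[of x y] by (simp add: power_mult_distrib sn_sq)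
  then show ?thesis using sn_nonneg[of x] sn_nonneg[of y]
    by (meson mult_nonneg_nonneg power2_le_imp_le)
qed

lemma sn_triangle: "sn (x + y) \<le> sn x + sn y"
proof -
  have "Re (B (x + y) (x + y)) = Re (B x x) + 2 * Re (B x y) + Re (B y y)"
    using herm[of x y] by (simp add: add_left add_right)
  also have "\<dots> \<le> (sn x)\<^sup>2 + 2 * (sn x * sn y) + (sn y)\<^sup>2"
    using cs[of x y] complex_Re_le_cmod[of "B x y"] by (simp add: sn_sq)
  also have "\<dots> = (sn x + sn y)\<^sup>2" by (simp add: power2_eq_square algebra_simps)
  finally have "(sn (x + y))\<^sup>2 \<le> (sn x + sn y)\<^sup>2" by (simp add: sn_sq)
  then show ?thesis using sn_nonneg[of x] sn_nonneg[of y]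
    by (meson add_nonneg_nonneg power2_le_imp_le)
qed

lemma sn_commute: "sn (x - y) = sn (y - x)"
proof -
  have "y - x = - (x - y)" by simp
  then have "B (y - x) (y - x) = B (x - y) (x - y)"
    by (simp only: minus_left minus_right minus_minus)
  then show ?thesis unfolding sn_def by simp
qed

lemma parallelogram:
  "Re (B (x + y) (x + y)) + Re (B (x - y) (x - y)) = 2 * Re (B x x) + 2 * Re (B y y)"
  by (simp add: add_left add_right diff_left diff_right)

lemma scale_self: "Re (B (a *\<^sub>C x) (a *\<^sub>C x)) = (cmod a)\<^sup>2 * Re (B x x)"
  using expand_re[of 0 "-a" x] by (simp add: scaleC_minus_left)

end

interpretation cin: sesq cinner
proof
  fix x y z :: 'a and a
  show "cinner (x + y) z = cinner x z + cinner y z" by (rule cinner_add_left)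
  show "cinner (a *\<^sub>C x) z = a * cinner x z" by (rule cinner_scaleC_left)
  show "cinner y x = cnj (cinner x y)" by (rule cinner_commute)
  show "0 \<le> Re (cinner x x)" by (rule cinner_nonneg)
qed



lemma hnorm_sn: "hnorm x = cin.sn x"
  unfolding hnorm_def cin.sn_def by simp

lemma bop_add: "bop T \<Longrightarrow> T (x + y) = T x + T y" unfolding bop_def by blast
lemma bop_scale: "bop T \<Longrightarrow> T (a *\<^sub>C x) = a *\<^sub>C T x" unfolding bop_def by blast
lemma bop_zero: "bop T \<Longrightarrow> T 0 = 0"
  using bop_add[of T 0 0] by simp
lemma bop_minus: "bop T \<Longrightarrow> T (- x) = - T x"
  using bop_add[of T x "-x"] bop_zero[of T] by (simp add: eq_neg_iff_add_eq_0 add.commute)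
lemma bop_diff: "bop T \<Longrightarrow> T (x - y) = T x - T y"
  using bop_add[of T x "-y"] bop_minus[of T y] by simp
lemma bop_bound: "bop (T::'a::chilbert \<Rightarrow> 'a) \<Longrightarrow> \<exists>c\<ge>1. \<forall>x. hnorm (T x) \<le> c * hnorm x"
proof -
  assume "bop T"
  then obtain c where c: "\<forall>x. hnorm (T x) \<le> c * hnorm x" unfolding bop_def by blast
  have "\<forall>x. hnorm (T x) \<le> max c 1 * hnorm x"
  proof
    fix x :: 'a
    have "0 \<le> hnorm x" unfolding hnorm_sn by (rule cin.sn_nonneg)
    then have "c * hnorm x \<le> max c 1 * hnorm x" by (simp add: mult_right_mono)
    then show "hnorm (T x) \<le> max c 1 * hnorm x" using c by (meson order_trans)
  qed
  then show ?thesis by (intro exI[of _ "max c 1"]) simp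
qed

definition subsp :: "'a::chilbert set \<Rightarrow> bool" where
  "subsp M \<longleftrightarrow> 0 \<in> M \<and> (\<forall>x\<in>M. \<forall>y\<in>M. x + y \<in> M) \<and> (\<forall>a. \<forall>x\<in>M. a *\<^sub>C x \<in> M)"

definition closed_sub :: "'a::chilbert set \<Rightarrow> bool" where
  "closed_sub M \<longleftrightarrow> (\<forall>X L. (\<forall>n. X n \<in> M) \<longrightarrow> (\<lambda>n. hnorm (X n - L)) \<longlonglongrightarrow> 0 \<longrightarrow> L \<in> M)"

lemma lim_zero_bound:
  assumes "(\<lambda>n. hnorm (X n - L)) \<longlonglongrightarrow> 0" and "\<And>n. a \<le> K * hnorm (X n - L)"
  shows "a \<le> 0"
proof -
  have "(\<lambda>n. K * hnorm (X n - L)) \<longlonglongrightarrow> K * 0"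
    by (intro tendsto_intros assms(1))
  then show ?thesis using assms(2) by (intro LIMSEQ_le_const[where X="\<lambda>n. K * hnorm (X n - L)"]) auto
qed

lemma proj_exists:
  fixes M :: "'a::chilbert set"
  assumes S: "subsp M" and C: "closed_sub M"
  shows "\<exists>p\<in>M. \<forall>m\<in>M. cinner (u - p) m = 0"
proof -
  define f where "f = (\<lambda>m. Re (cinner (u - m) (u - m)))"
  define d where "d = Inf (f ` M)"
  have M0: "0 \<in> M" and Madd: "\<And>x y. x \<in> M \<Longrightarrow> y \<in> M \<Longrightarrow> x + y \<in> M"
    and Msc: "\<And>a x. x \<in> M \<Longrightarrow> a *\<^sub>C x \<in> M" using S unfolding subsp_def by auto
  have ne: "f ` M \<noteq> {}" using M0 by auto
  have fnn: "\<And>m. 0 \<le> f m" unfolding f_def by (rule cinner_nonneg)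
  have bdd: "bdd_below (f ` M)" by (rule bdd_belowI[of _ 0]) (auto simp: fnn)
  have low: "\<And>m. m \<in> M \<Longrightarrow> d \<le> f m" unfolding d_def using bdd by (auto intro: cInf_lower)
  have d0: "0 \<le> d" unfolding d_def using ne fnn by (auto intro: cInf_greatest)
  have "\<forall>n. \<exists>m\<in>M. f m < d + inverse (real (Suc n))"
  proof
    fix n
    have "Inf (f ` M) < d + inverse (real (Suc n))" unfolding d_def by simp
    then obtain y where "y \<in> f ` M" "y < d + inverse (real (Suc n))" using cInf_lessD[OF ne] by blast
    then show "\<exists>m\<in>M. f m < d + inverse (real (Suc n))" by auto
  qed
  then obtain X where XM: "\<And>n. X n \<in> M" and Xf: "\<And>n. f (X n) < d + inverse (real (Suc n))"
    by metis
  have par: "Re (cinner (X j - X k) (X j - X k)) \<le> 2 * inverse (real (Suc j)) + 2 * inverse (real (Suc k))" for j k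
  proof -
    define a where "a = u - X k"
    define b where "b = u - X j"
    define mid where "mid = (1/2 :: complex) *\<^sub>C (X j + X k)"
    have midM: "mid \<in> M" unfolding mid_def using XM Madd Msc by blast
    have "a + b = (2::complex) *\<^sub>C (u - mid)"
    proof -
      have "(2::complex) *\<^sub>C (u - mid) = (2::complex) *\<^sub>C u - (2::complex) *\<^sub>C mid"
        by (rule scaleC_diff_right)
      also have "(2::complex) *\<^sub>C mid = X j + X k"
        unfolding mid_def scaleC_scaleC by (simp add: scaleC_one)
      finally show ?thesis unfolding a_def b_def scaleC_two by (simp add: algebra_simps)
    qed
    then have "Re (cinner (a + b) (a + b)) = 4 * f mid"
      unfolding f_def by (simp only: cin.scale_self) simp
    moreover have "a - b = X j - X k" unfolding a_def b_def by (simp add: algebra_simps)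
    moreover have "f (X k) = Re (cinner a a)" "f (X j) = Re (cinner b b)"
      unfolding f_def a_def b_def by auto
    ultimately have "Re (cinner (X j - X k) (X j - X k)) = 2 * f (X k) + 2 * f (X j) - 4 * f mid"
      using cin.parallelogram[of a b] by simp
    then show ?thesis using Xf[of j] Xf[of k] low[OF midM] by simp
  qed
  have cauchy: "\<forall>e>0. \<exists>N. \<forall>m\<ge>N. \<forall>n\<ge>N. sqrt (Re (cinner (X m - X n) (X m - X n))) < e"
  proof (intro allI impI)
    fix e :: real assume e: "e > 0"
    then have "e\<^sup>2 / 4 > 0" by simp
    then obtain N where N: "N > 0" "inverse (real N) < e\<^sup>2 / 4"
      using ex_inverse_of_nat_less by blast
    have "\<forall>m\<ge>N. \<forall>n\<ge>N. sqrt (Re (cinner (X m - X n) (X m - X n))) < e"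
    proof (intro allI impI)
      fix m n assume mn: "m \<ge> N" "n \<ge> N"
      have "inverse (real (Suc m)) \<le> inverse (real N)" using mn N
        by (simp add: le_imp_inverse_le)
      moreover have "inverse (real (Suc n)) \<le> inverse (real N)" using mn N
        by (simp add: le_imp_inverse_le)
      ultimately have "Re (cinner (X m - X n) (X m - X n)) < e\<^sup>2"
        using par[of m n] N by linarith
      then have "sqrt (Re (cinner (X m - X n) (X m - X n))) < sqrt (e\<^sup>2)"
        by (rule real_sqrt_less_mono)
      then show "sqrt (Re (cinner (X m - X n) (X m - X n))) < e" using e by simp
    qed
    then show "\<exists>N. \<forall>m\<ge>N. \<forall>n\<ge>N. sqrt (Re (cinner (X m - X n) (X m - X n))) < e" by blast
  qed
  obtain L where Llim: "(\<lambda>n. hnorm (X n - L)) \<longlonglongrightarrow> 0"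
    using cinner_complete[OF cauchy] unfolding hnorm_def by blast
  have LM: "L \<in> M" using C XM Llim unfolding closed_sub_def by blast
  have tri: "hnorm (u - L) \<le> sqrt (d + inverse (real (Suc n))) + hnorm (X n - L)" for n
  proof -
    have "hnorm (u - L) = hnorm ((u - X n) + (X n - L))" by simp
    also have "\<dots> \<le> hnorm (u - X n) + hnorm (X n - L)"
      unfolding hnorm_sn by (rule cin.sn_triangle)
    also have "hnorm (u - X n) \<le> sqrt (d + inverse (real (Suc n)))"
      unfolding hnorm_def using Xf[of n] unfolding f_def by simp
    finally show ?thesis by simp
  qed
  have "(\<lambda>n. sqrt (d + inverse (real (Suc n))) + hnorm (X n - L)) \<longlonglongrightarrow> sqrt (d + 0) + 0"
    by (intro tendsto_intros LIMSEQ_inverse_real_of_nat Llim)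
  then have "hnorm (u - L) \<le> sqrt d"
    using tri by (intro LIMSEQ_le_const[where X="\<lambda>n. sqrt (d + inverse (real (Suc n))) + hnorm (X n - L)"]) auto
  then have "f L \<le> d" unfolding hnorm_def f_def
    using d0 by (metis cinner_nonneg real_sqrt_le_iff)
  then have minL: "\<And>m. m \<in> M \<Longrightarrow> f L \<le> f m" using low by (meson order_trans)
  have "\<forall>m\<in>M. cinner (u - L) m = 0"
  proof (intro ballI, rule ccontr)
    fix m assume mM: "m \<in> M" and nz: "cinner (u - L) m \<noteq> 0"
    define v where "v = u - L"
    define c where "c = cinner v m"
    define r where "r = Re (cinner m m)"
    define t where "t = 1 / (r + 1)"
    have r0: "0 \<le> r" unfolding r_def by (rule cinner_nonneg)
    have t0: "t > 0" unfolding t_def using r0 by simp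
    have tr: "t * r < 1" unfolding t_def using r0 by (simp add: field_simps)
    define k where "k = complex_of_real t * c"
    have "L + k *\<^sub>C m \<in> M" using Madd Msc LM mM by blast
    then have "f L \<le> f (L + k *\<^sub>C m)" by (rule minL)
    also have "f (L + k *\<^sub>C m) = Re (cinner (v - k *\<^sub>C m) (v - k *\<^sub>C m))"
      unfolding f_def v_def by (simp add: algebra_simps)
    also have "\<dots> = f L - 2 * Re (cnj k * c) + (cmod k)\<^sup>2 * r"
      unfolding cin.expand_re f_def v_def c_def r_def by simp
    also have "Re (cnj k * c) = t * (cmod c)\<^sup>2"
    proof -
      have "cnj k * c = complex_of_real (t * (cmod c)\<^sup>2)"
        unfolding k_def by (simp add: mult.assoc cnj_mult_self)
      then show ?thesis by (simp only: Re_complex_of_real)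
    qed
    also have "(cmod k)\<^sup>2 = t\<^sup>2 * (cmod c)\<^sup>2"
      unfolding k_def using t0 by (simp add: norm_mult power_mult_distrib)
    finally have "0 \<le> t * (cmod c)\<^sup>2 * (t * r - 2)" by (simp add: power2_eq_square algebra_simps)
    moreover have "t * (cmod c)\<^sup>2 > 0" using t0 nz unfolding c_def v_def by simp
    ultimately have "0 \<le> t * r - 2" by (simp add: zero_le_mult_iff)
    then show False using tr by simp
  qed
  then show ?thesis using LM by blast
qed



lemma hnorm_le0: "hnorm (x::'a::chilbert) \<le> 0 \<Longrightarrow> x = 0"
proof -
  assume "hnorm x \<le> 0"
  then have "Re (cinner x x) = 0" unfolding hnorm_def using cinner_nonneg[of x] by simp
  then have "cinner x x = 0" using cin.self_real[of x] by simp
  then show "x = 0" by (rule cinner_eq_zero)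
qed

lemma riesz:
  fixes T :: "'a::chilbert \<Rightarrow> 'a"
  assumes T: "bop T"
  shows "\<exists>w. \<forall>x. cinner (T x) y = cinner x w"
proof -
  define f where "f = (\<lambda>x. cinner (T x) y)"
  define K where "K = {x. f x = 0}"
  have fdiff: "f (a - b) = f a - f b" for a b unfolding f_def by (simp add: bop_diff[OF T] cin.diff_left)
  have fsc: "f (c *\<^sub>C a) = c * f a" for a c unfolding f_def by (simp add: bop_scale[OF T] cinner_scaleC_left)
  have sK: "subsp K" unfolding subsp_def K_def f_def
    by (simp add: bop_zero[OF T] bop_add[OF T] bop_scale[OF T] cin.add_left cinner_scaleC_left)
  obtain c where c: "\<forall>x. hnorm (T x) \<le> c * hnorm x" using bop_bound[OF T] by blast
  have cK: "closed_sub K" unfolding closed_sub_def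
  proof (intro allI impI)
    fix X L assume XK: "\<forall>n. X n \<in> K" and lim: "(\<lambda>n. hnorm (X n - L)) \<longlonglongrightarrow> 0"
    have "cmod (f L) \<le> (c * hnorm y) * hnorm (X n - L)" for n
    proof -
      have "f L = f (L - X n)" using XK fdiff[of L "X n"] unfolding K_def by simp
      also have "cmod (f (L - X n)) \<le> hnorm (T (L - X n)) * hnorm y"
        unfolding f_def hnorm_sn by (rule cin.cs)
      also have "\<dots> \<le> (c * hnorm (L - X n)) * hnorm y"
        using c by (simp add: mult_right_mono hnorm_sn cin.sn_nonneg)
      also have "hnorm (L - X n) = hnorm (X n - L)" unfolding hnorm_sn by (rule cin.sn_commute)
      finally show ?thesis by (simp add: algebra_simps)
    qed
    then have "cmod (f L) \<le> 0" by (intro lim_zero_bound[OF lim])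
    then show "L \<in> K" unfolding K_def by simp
  qed
  show ?thesis
  proof (cases "\<forall>x. f x = 0")
    case True
    then show ?thesis by (intro exI[of _ 0]) (simp add: f_def)
  next
    case False
    then obtain x0 where x0: "f x0 \<noteq> 0" by blast
    obtain p where pK: "p \<in> K" and orth: "\<forall>m\<in>K. cinner (x0 - p) m = 0"
      using proj_exists[OF sK cK, of x0] by blast
    define v where "v = x0 - p"
    have fv: "f v = f x0" unfolding v_def fdiff using pK unfolding K_def by simp
    have vv: "cinner v v \<noteq> 0"
    proof
      assume "cinner v v = 0"
      then have "v = 0" by (rule cinner_eq_zero)
      then have "f v = 0" unfolding f_def by (simp add: bop_zero[OF T])
      then show False using fv x0 by simp
    qed
    have vvr: "cnj (cinner v v) = cinner v v" using cin.herm[of v v] by simp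
    have key: "f x = cinner x v * f v / cinner v v" for x
    proof -
      define c where "c = f x / f v"
      have "f (x - c *\<^sub>C v) = 0" unfolding fdiff fsc c_def using fv x0 by simp
      then have "cinner v (x - c *\<^sub>C v) = 0" using orth unfolding K_def v_def by simp
      then have "cinner v x = cnj c * cinner v v" by (simp add: cin.diff_right cin.scale_right)
      moreover have "cinner x v = cnj (cinner v x)" by (rule cin.herm)
      ultimately have "cinner x v = c * cnj (cinner v v)" by simp
      then have "cinner x v = c * cinner v v" using vvr by simp
      then show ?thesis unfolding c_def using vv fv x0 by (simp add: field_simps)
    qed
    show ?thesis
    proof (intro exI[of _ "cnj (f v / cinner v v) *\<^sub>C v"] allI)
      fix x
      show "cinner (T x) y = cinner x (cnj (f v / cinner v v) *\<^sub>C v)"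
        using key[of x] unfolding f_def by (simp add: cin.scale_right)
    qed
  qed
qed

lemma adj_prop:
  fixes T :: "'a::chilbert \<Rightarrow> 'a"
  assumes T: "bop T"
  shows "cinner (T x) y = cinner x (adj T y)"
proof -
  have "\<forall>y. \<exists>w. \<forall>x. cinner (T x) y = cinner x w" using riesz[OF T] by blast
  then obtain g where g: "\<And>y x. cinner (T x) y = cinner x (g y)" by metis
  have "adj T = g" unfolding adj_def
  proof (rule the_equality)
    show "\<forall>x y. cinner (T x) y = cinner x (g y)" using g by blast
  next
    fix T' assume h: "\<forall>x y. cinner (T x) y = cinner x (T' y)"
    show "T' = g"
    proof
      fix y
      have "cinner (T' y - g y) (T' y - g y) = 0"
        using h g by (simp add: cin.diff_right)
      then show "T' y = g y" using cinner_eq_zero by fastforce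
    qed
  qed
  then show ?thesis using g by simp
qed

lemma mp_inv_prop:
  fixes A :: "'a::chilbert \<Rightarrow> 'a"
  assumes A: "bop A"
  shows "A (mp_inv A (A w)) = A w"
proof -
  define N where "N = {x. A x = 0}"
  have sN: "subsp N" unfolding subsp_def N_def
    by (simp add: bop_zero[OF A] bop_add[OF A] bop_scale[OF A])
  obtain c where c: "\<forall>x. hnorm (A x) \<le> c * hnorm x" using bop_bound[OF A] by blast
  have cN: "closed_sub N" unfolding closed_sub_def
  proof (intro allI impI)
    fix X L assume XN: "\<forall>n. X n \<in> N" and lim: "(\<lambda>n. hnorm (X n - L)) \<longlonglongrightarrow> 0"
    have "hnorm (A L) \<le> c * hnorm (X n - L)" for n
    proof -
      have "A L = A (L - X n)" using XN unfolding N_def by (simp add: bop_diff[OF A])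
      then have "hnorm (A L) \<le> c * hnorm (L - X n)" using c by simp
      also have "hnorm (L - X n) = hnorm (X n - L)" unfolding hnorm_sn by (rule cin.sn_commute)
      finally show ?thesis .
    qed
    then have "hnorm (A L) \<le> 0" by (intro lim_zero_bound[OF lim])
    then show "L \<in> N" unfolding N_def using hnorm_le0 by blast
  qed
  obtain p where pN: "p \<in> N" and orth: "\<forall>m\<in>N. cinner (w - p) m = 0"
    using proj_exists[OF sN cN, of w] by blast
  have ex: "(\<forall>n. A n = 0 \<longrightarrow> cinner (w - p) n = 0) \<and> A (w - p) = A w"
    using orth pN unfolding N_def by (simp add: bop_diff[OF A])
  have uq: "x1 = x2" if h1: "(\<forall>n. A n = 0 \<longrightarrow> cinner x1 n = 0) \<and> A x1 = A w"
    and h2: "(\<forall>n. A n = 0 \<longrightarrow> cinner x2 n = 0) \<and> A x2 = A w" for x1 x2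
  proof -
    have "A (x1 - x2) = 0" using h1 h2 by (simp add: bop_diff[OF A])
    then have "cinner (x1 - x2) (x1 - x2) = 0" using h1 h2 by (simp add: cin.diff_left)
    then show ?thesis using cinner_eq_zero by fastforce
  qed
  have "\<exists>!x. (\<forall>n. A n = 0 \<longrightarrow> cinner x n = 0) \<and> A x = A w"
    using ex uq by blast
  then have "(\<forall>n. A n = 0 \<longrightarrow> cinner (mp_inv A (A w)) n = 0) \<and> A (mp_inv A (A w)) = A w"
    unfolding mp_inv_def by (rule theI')
  then show ?thesis by blast
qed

lemma pos_herm:
  fixes A :: "'a::chilbert \<Rightarrow> 'a"
  assumes P: "positive_op A"
  shows "cinner (A y) x = cnj (cinner (A x) y)"
proof -
  have A: "bop A" and im: "\<And>z. Im (cinner (A z) z) = 0" using P unfolding positive_op_def by auto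
  have "Im (cinner (A (x + y)) (x + y)) = 0" by (rule im)
  then have i1: "Im (cinner (A x) y) + Im (cinner (A y) x) = 0"
    using im[of x] im[of y] by (simp add: bop_add[OF A] cin.add_left cin.add_right)
  have "Im (cinner (A (x + \<i> *\<^sub>C y)) (x + \<i> *\<^sub>C y)) = 0" by (rule im)
  then have i2: "Re (cinner (A y) x) - Re (cinner (A x) y) = 0"
    using im[of x] im[of y]
    by (simp add: bop_add[OF A] bop_scale[OF A] cin.add_left cin.add_right cinner_scaleC_left cin.scale_right)
  show ?thesis using i1 i2 by (simp add: complex_eq_iff)
qed

lemma pos_sesq:
  fixes A :: "'a::chilbert \<Rightarrow> 'a"
  assumes P: "positive_op A"
  shows "sesq (\<lambda>x y. cinner (A x) y)"
proof -
  have A: "bop A" using P unfolding positive_op_def by auto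
  show ?thesis
  proof
    fix x y z :: 'a and a
    show "cinner (A (x + y)) z = cinner (A x) z + cinner (A y) z"
      by (simp add: bop_add[OF A] cin.add_left)
    show "cinner (A (a *\<^sub>C x)) z = a * cinner (A x) z"
      by (simp add: bop_scale[OF A] cinner_scaleC_left)
    show "cinner (A y) x = cnj (cinner (A x) y)" by (rule pos_herm[OF P])
    show "0 \<le> Re (cinner (A x) x)" using P unfolding positive_op_def by auto
  qed
qed



context sesq begin

lemma buzano:
  assumes e: "Re (B e e) = 1" and al: "\<alpha> \<noteq> 0"
  shows "cmod (B a e * B e c) \<le> (max 1 (cmod (\<alpha> - 1)) * sn a * sn c + cmod (B a c)) / cmod \<alpha>"
proof -
  define pa where "pa = B a e"
  define k where "k = \<alpha> * pa"
  define M where "M = max 1 (cmod (\<alpha> - 1))"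
  have M1: "1 \<le> M" and Ma: "cmod (\<alpha> - 1) \<le> M" unfolding M_def by auto
  have ck: "Re (cnj k * pa) = Re \<alpha> * (cmod pa)\<^sup>2"
  proof -
    have "cnj k * pa = cnj \<alpha> * complex_of_real ((cmod pa)\<^sup>2)"
      unfolding k_def by (simp add: mult.assoc cnj_mult_self)
    then show ?thesis by simp
  qed
  have kk: "(cmod k)\<^sup>2 = (cmod \<alpha>)\<^sup>2 * (cmod pa)\<^sup>2" unfolding k_def by (simp add: norm_mult power_mult_distrib)
  have ex: "(sn (a - k *\<^sub>C e))\<^sup>2 = (sn a)\<^sup>2 + (cmod pa)\<^sup>2 * ((cmod \<alpha>)\<^sup>2 - 2 * Re \<alpha>)"
    unfolding sn_sq expand_re e ck kk pa_def[symmetric] by (simp add: algebra_simps)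
  have am1: "(cmod (\<alpha> - 1))\<^sup>2 = (cmod \<alpha>)\<^sup>2 - 2 * Re \<alpha> + 1"
    unfolding cmod_power2 by (simp add: power2_eq_square algebra_simps)
  have pa_le: "(cmod pa)\<^sup>2 \<le> (sn a)\<^sup>2" using cs_sq[of a e] e unfolding pa_def sn_sq by simp
  have "(sn (a - k *\<^sub>C e))\<^sup>2 \<le> (M * sn a)\<^sup>2"
  proof (cases "(cmod \<alpha>)\<^sup>2 - 2 * Re \<alpha> \<ge> 0")
    case True
    then have "(sn (a - k *\<^sub>C e))\<^sup>2 \<le> (sn a)\<^sup>2 + (sn a)\<^sup>2 * ((cmod \<alpha>)\<^sup>2 - 2 * Re \<alpha>)"
      unfolding ex using pa_le by (simp add: mult_right_mono)
    also have "\<dots> = (cmod (\<alpha> - 1))\<^sup>2 * (sn a)\<^sup>2" unfolding am1 by (simp add: algebra_simps)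
    also have "\<dots> \<le> M\<^sup>2 * (sn a)\<^sup>2"
      using Ma by (simp add: mult_right_mono power_mono)
    finally show ?thesis by (simp add: power_mult_distrib)
  next
    case False
    then have "(sn (a - k *\<^sub>C e))\<^sup>2 \<le> (sn a)\<^sup>2"
      unfolding ex by (simp add: mult_nonneg_nonpos)
    also have "\<dots> \<le> M\<^sup>2 * (sn a)\<^sup>2"
    proof -
      have M2: "1 \<le> M\<^sup>2" using M1 one_le_power by blast
      show ?thesis using mult_right_mono[OF M2, of "(sn a)\<^sup>2"] by simp
    qed
    finally show ?thesis by (simp add: power_mult_distrib)
  qed
  then have snk: "sn (a - k *\<^sub>C e) \<le> M * sn a"
    using M1 sn_nonneg[of a] by (meson mult_nonneg_nonneg order_trans zero_le_one power2_le_imp_le)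
  have "k * B e c = B a c - B (a - k *\<^sub>C e) c" by (simp add: diff_left scale_left)
  then have "cmod (k * B e c) \<le> cmod (B a c) + cmod (B (a - k *\<^sub>C e) c)"
    by (metis norm_triangle_ineq4)
  also have "cmod (B (a - k *\<^sub>C e) c) \<le> M * sn a * sn c"
    using cs[of "a - k *\<^sub>C e" c] snk sn_nonneg[of c] by (meson mult_right_mono order_trans)
  finally have "cmod \<alpha> * cmod (pa * B e c) \<le> M * sn a * sn c + cmod (B a c)"
    unfolding k_def by (simp add: norm_mult mult.assoc)
  then show ?thesis unfolding M_def[symmetric] pa_def[symmetric] using al
    by (simp add: field_simps)
qed

lemma power_trick:
  assumes sym: "\<And>u v. B (T u) v = B u (T v)"
    and bnd: "\<And>k. sn ((T ^^ k) x) \<le> K * c ^ k"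
    and c: "c > 0" and x: "sn x > 0"
  shows "sn (T x) \<le> c * sn x"
proof -
  have symk: "B ((T ^^ k) u) v = B u ((T ^^ k) v)" for k u v
    by (induction k arbitrary: u v) (simp_all add: sym funpow_swap1)
  have sq: "(sn ((T ^^ k) x))\<^sup>2 \<le> sn ((T ^^ (2 * k)) x) * sn x" for k
  proof -
    have "(sn ((T ^^ k) x))\<^sup>2 = Re (B ((T ^^ k) ((T ^^ k) x)) x)"
      unfolding sn_sq symk ..
    also have "(T ^^ k) ((T ^^ k) x) = (T ^^ (2 * k)) x"
      by (simp add: mult_2 funpow_add)
    also have "Re (B ((T ^^ (2 * k)) x) x) \<le> sn ((T ^^ (2 * k)) x) * sn x"
      using cs complex_Re_le_cmod order_trans by blast
    finally show ?thesis .
  qed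
  have P: "(sn (T x)) ^ (2 ^ n) * sn x \<le> sn ((T ^^ (2 ^ n)) x) * sn x ^ (2 ^ n)" for n
  proof (induction n)
    case 0
    then show ?case by simp
  next
    case (Suc n)
    have pw: "\<And>y::real. y ^ 2 ^ n * y ^ 2 ^ n = y ^ (2 * 2 ^ n)" by (simp add: mult_2 power_add)
    have "((sn (T x)) ^ (2 ^ n) * sn x)\<^sup>2 \<le> (sn ((T ^^ (2 ^ n)) x) * sn x ^ (2 ^ n))\<^sup>2"
      using Suc.IH sn_nonneg by (intro power_mono) auto
    also have "\<dots> = (sn ((T ^^ (2 ^ n)) x))\<^sup>2 * sn x ^ (2 ^ Suc n)"
      by (simp add: power_mult_distrib power_mult[symmetric] mult.commute)
    also have "\<dots> \<le> (sn ((T ^^ (2 * 2 ^ n)) x) * sn x) * sn x ^ (2 ^ Suc n)"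
      using sq[of "2 ^ n"] sn_nonneg by (intro mult_right_mono) auto
    finally have "(sn (T x)) ^ (2 ^ Suc n) * sn x * sn x \<le> sn ((T ^^ (2 ^ Suc n)) x) * sn x ^ (2 ^ Suc n) * sn x"
      by (simp add: power_mult_distrib power_mult[symmetric] power2_eq_square algebra_simps pw)
    then show ?case using x by simp
  qed
  define q where "q = sn (T x) / (c * sn x)"
  have q0: "0 \<le> q" unfolding q_def using c x sn_nonneg by simp
  have qb: "q ^ (2 ^ n) \<le> K / sn x" for n
  proof -
    have "(sn (T x)) ^ (2 ^ n) * sn x \<le> K * c ^ (2 ^ n) * sn x ^ (2 ^ n)"
      using P[of n] bnd[of "2 ^ n"] sn_nonneg x by (meson mult_right_mono order_trans zero_le_power)
    then have "(sn (T x)) ^ (2 ^ n) \<le> (K / sn x) * (c * sn x) ^ (2 ^ n)"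
      using x by (simp add: field_simps power_mult_distrib)
    then show ?thesis unfolding q_def using c x by (simp add: power_divide field_simps)
  qed
  have "q \<le> 1"
  proof (rule ccontr)
    assume "\<not> q \<le> 1"
    then have q1: "1 < q" by simp
    then obtain n where n: "K / sn x < q ^ n" using real_arch_pow by blast
    have "q ^ n \<le> q ^ (2 ^ n)" using q1 by (intro power_increasing) (auto intro: less_imp_le less_exp)
    then show False using n qb[of n] by simp
  qed
  then show ?thesis unfolding q_def using c x by (simp add: field_simps)
qed

end



lemma sup_up:
  fixes g :: "'b \<Rightarrow> real"
  assumes "\<forall>z\<in>U. g z \<le> Mb" and "z \<in> U"
  shows "g z \<le> Sup (insert 0 (g ` U))"
proof -
  have "bdd_above (g ` U)" using assms(1) by (intro bdd_aboveI2) blast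
  then have bdd: "bdd_above (insert 0 (g ` U))" by simp
  show ?thesis using bdd assms(2) by (intro cSup_upper) auto
qed

lemma sup_nn:
  fixes g :: "'b \<Rightarrow> real"
  assumes "\<forall>z\<in>U. g z \<le> Mb"
  shows "0 \<le> Sup (insert 0 (g ` U))"
proof -
  have "bdd_above (g ` U)" using assms(1) by (intro bdd_aboveI2) blast
  then have bdd: "bdd_above (insert 0 (g ` U))" by simp
  show ?thesis using bdd by (intro cSup_upper) auto
qed

theorem theorem2p2:
  fixes A S :: "'a::chilbert \<Rightarrow> 'a" and \<alpha> :: complex
  assumes "positive_op A" and "S \<in> BA A" and "\<alpha> \<noteq> 0"
  shows "(A_dwrad A S)\<^sup>2
    \<le> (A_numrad A (\<lambda>z. sharpA A S (S z) + S z))\<^sup>2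
       + 2 / cmod \<alpha> * A_numrad A (\<lambda>z. sharpA A S (S (S z)))
       + max 1 (cmod (\<alpha> - 1)) / cmod \<alpha>
         * A_opnorm A (\<lambda>z. sharpA A S (S (sharpA A S (S z))) + sharpA A S (S z))"
proof -
  have Ab: "bop A" using assms(1) unfolding positive_op_def by auto
  have Sb: "bop S" and "\<exists>R. bop R \<and> A \<circ> R = adj S \<circ> A" using assms(2) unfolding BA_def by auto
  then obtain R where Rb: "bop R" and AR: "A \<circ> R = adj S \<circ> A" by blast
  interpret aa: sesq "\<lambda>x y. cinner (A x) y" by (rule pos_sesq[OF assms(1)])
  have an: "\<And>z. anorm A z = aa.sn z" unfolding anorm_def aa.sn_def by simp
  define Sh where "Sh = sharpA A S"
  have ARu: "A (R u) = adj S (A u)" for u using AR by (metis comp_apply)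
  have K1: "cinner (A (R u)) v = cinner (A u) (S v)" for u v
  proof -
    have "cinner (A (R u)) v = cnj (cinner v (adj S (A u)))" unfolding ARu by (rule cin.herm)
    also have "cinner v (adj S (A u)) = cinner (S v) (A u)" by (rule adj_prop[OF Sb, symmetric])
    also have "cnj (cinner (S v) (A u)) = cinner (A u) (S v)" by (rule cin.herm[symmetric])
    finally show ?thesis .
  qed
  have K2: "A (Sh u) = A (R u)" for u
    unfolding Sh_def sharpA_def comp_apply ARu[symmetric] by (rule mp_inv_prop[OF Ab])
  have KS: "cinner (A (Sh u)) v = cinner (A u) (S v)" for u v using K1 K2 by simp
  obtain cR where cR: "cR \<ge> 1" "\<forall>x. hnorm (R x) \<le> cR * hnorm x" using bop_bound[OF Rb] by blast
  obtain cS where cS: "cS \<ge> 1" "\<forall>x. hnorm (S x) \<le> cS * hnorm x" using bop_bound[OF Sb] by blast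
  obtain cA where cA: "cA \<ge> 1" "\<forall>x. hnorm (A x) \<le> cA * hnorm x" using bop_bound[OF Ab] by blast
  define T where "T = (\<lambda>x. R (S x))"
  define c where "c = cR * cS"
  have c1: "c \<ge> 1" unfolding c_def using mult_mono[of 1 cR 1 cS] cR(1) cS(1) by simp
  have Tsym: "cinner (A (T u)) v = cinner (A u) (T v)" for u v
  proof -
    have "cinner (A (T u)) v = cinner (A (S u)) (S v)" unfolding T_def by (rule K1)
    moreover have "cinner (A u) (T v) = cnj (cinner (A (T v)) u)" by (rule aa.herm)
    moreover have "cinner (A (T v)) u = cinner (A (S v)) (S u)" unfolding T_def by (rule K1)
    moreover have "cnj (cinner (A (S v)) (S u)) = cinner (A (S u)) (S v)" by (rule aa.herm[symmetric])
    ultimately show ?thesis by simp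
  qed
  have Tpow: "hnorm ((T ^^ k) x) \<le> c ^ k * hnorm x" for k x
  proof (induction k)
    case 0 then show ?case by simp
  next
    case (Suc k)
    have "hnorm ((T ^^ Suc k) x) = hnorm (R (S ((T ^^ k) x)))" unfolding T_def by simp
    also have "\<dots> \<le> cR * hnorm (S ((T ^^ k) x))" using cR by blast
    also have "\<dots> \<le> cR * (cS * hnorm ((T ^^ k) x))" using cR cS by (intro mult_left_mono) auto
    also have "\<dots> \<le> cR * (cS * (c ^ k * hnorm x))" using cR cS Suc.IH by (intro mult_left_mono) auto
    finally show ?case unfolding c_def by (simp add: algebra_simps)
  qed
  have snh: "aa.sn y \<le> sqrt cA * hnorm y" for y
  proof -
    have "(aa.sn y)\<^sup>2 \<le> cmod (cinner (A y) y)" unfolding aa.sn_sq by (rule complex_Re_le_cmod)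
    also have "\<dots> \<le> hnorm (A y) * hnorm y" unfolding hnorm_sn by (rule cin.cs)
    also have "\<dots> \<le> cA * hnorm y * hnorm y"
    proof (rule mult_right_mono)
      show "hnorm (A y) \<le> cA * hnorm y" using cA(2) by blast
      show "0 \<le> hnorm y" unfolding hnorm_sn by (rule cin.sn_nonneg)
    qed
    also have "\<dots> = (sqrt cA * hnorm y)\<^sup>2" using cA(1) by (simp add: power2_eq_square power_mult_distrib)
    finally have "(aa.sn y)\<^sup>2 \<le> (sqrt cA * hnorm y)\<^sup>2" .
    moreover have "0 \<le> sqrt cA * hnorm y" using cA(1) unfolding hnorm_sn by (simp add: cin.sn_nonneg)
    ultimately show ?thesis by (rule power2_le_imp_le)
  qed
  define C where "C = sqrt c"
  have C0: "C \<ge> 0" unfolding C_def using c1 by simp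
  have SbA: "aa.sn (S x) \<le> C * aa.sn x" for x
  proof -
    have base: "(aa.sn (S x))\<^sup>2 \<le> aa.sn (T x) * aa.sn x"
    proof -
      have "(aa.sn (S x))\<^sup>2 = Re (cinner (A (T x)) x)" unfolding aa.sn_sq T_def K1 ..
      also have "\<dots> \<le> aa.sn (T x) * aa.sn x"
        using complex_Re_le_cmod[of "cinner (A (T x)) x"] aa.cs[of "T x" x] by linarith
      finally show ?thesis .
    qed
    have "(aa.sn (S x))\<^sup>2 \<le> c * (aa.sn x)\<^sup>2"
    proof (cases "aa.sn x > 0")
      case True
      have "aa.sn (T x) \<le> c * aa.sn x"
      proof (rule aa.power_trick[where K = "sqrt cA * hnorm x"])
        show "cinner (A (T u)) v = cinner (A u) (T v)" for u v by (rule Tsym)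
        show "aa.sn ((T ^^ k) x) \<le> sqrt cA * hnorm x * c ^ k" for k
        proof -
          have "sqrt cA * hnorm ((T ^^ k) x) \<le> sqrt cA * (c ^ k * hnorm x)"
            using Tpow[of k x] by (rule mult_left_mono) (use cA(1) in simp)
          moreover have "sqrt cA * (c ^ k * hnorm x) = sqrt cA * hnorm x * c ^ k" by (simp add: algebra_simps)
          ultimately show ?thesis using snh[of "(T ^^ k) x"] by linarith
        qed
        show "c > 0" using c1 by simp
        show "aa.sn x > 0" by (rule True)
      qed
      then have "aa.sn (T x) * aa.sn x \<le> (c * aa.sn x) * aa.sn x"
        using aa.sn_nonneg[of x] by (rule mult_right_mono)
      then show ?thesis using base by (simp add: power2_eq_square algebra_simps)
    next
      case False
      then have "aa.sn x = 0" using aa.sn_nonneg[of x] by simp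
      then show ?thesis using base by simp
    qed
    then have "(aa.sn (S x))\<^sup>2 \<le> (C * aa.sn x)\<^sup>2"
      unfolding C_def using c1 by (simp add: power_mult_distrib)
    moreover have "0 \<le> C * aa.sn x" using C0 aa.sn_nonneg[of x] by simp
    ultimately show ?thesis by (rule power2_le_imp_le)
  qed
  have ShbA: "aa.sn (Sh u) \<le> C * aa.sn u" for u
  proof -
    have "(aa.sn (Sh u))\<^sup>2 = Re (cinner (A u) (S (Sh u)))" unfolding aa.sn_sq KS ..
    also have "\<dots> \<le> aa.sn u * aa.sn (S (Sh u))"
      using complex_Re_le_cmod[of "cinner (A u) (S (Sh u))"] aa.cs[of u "S (Sh u)"] by linarith
    also have "\<dots> \<le> aa.sn u * (C * aa.sn (Sh u))"
      using SbA[of "Sh u"] aa.sn_nonneg[of u] by (rule mult_left_mono)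
    finally have h: "aa.sn (Sh u) * aa.sn (Sh u) \<le> (C * aa.sn u) * aa.sn (Sh u)"
      by (simp add: power2_eq_square algebra_simps)
    show ?thesis
    proof (cases "aa.sn (Sh u) > 0")
      case True then show ?thesis using h by simp
    next
      case False
      then have "aa.sn (Sh u) = 0" using aa.sn_nonneg[of "Sh u"] by simp
      then show ?thesis using aa.sn_nonneg[of u] C0 by simp
    qed
  qed
  define U where "U = {z. anorm A z = 1}"
  have zU: "aa.sn z = 1" if "z \<in> U" for z using that unfolding U_def an by simp
  define g1 where "g1 = (\<lambda>z. cmod (cinner (A (Sh (S z) + S z)) z))"
  define g2 where "g2 = (\<lambda>z. cmod (cinner (A (Sh (S (S z)))) z))"
  define g3 where "g3 = (\<lambda>z. anorm A (Sh (S (Sh (S z))) + Sh (S z)))"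
  define g0 where "g0 = (\<lambda>z. sqrt ((cmod (cinner (A (S z)) z))\<^sup>2 + (anorm A (S z)) ^ 4))"
  define N1 where "N1 = Sup (insert 0 (g1 ` U))"
  define N2 where "N2 = Sup (insert 0 (g2 ` U))"
  define N3 where "N3 = Sup (insert 0 (g3 ` U))"
  have eN1: "A_numrad A (\<lambda>z. sharpA A S (S z) + S z) = N1"
    unfolding A_numrad_def N1_def g1_def U_def Sh_def by simp
  have eN2: "A_numrad A (\<lambda>z. sharpA A S (S (S z))) = N2"
    unfolding A_numrad_def N2_def g2_def U_def Sh_def by simp
  have eN3: "A_opnorm A (\<lambda>z. sharpA A S (S (sharpA A S (S z))) + sharpA A S (S z)) = N3"
    unfolding A_opnorm_def N3_def g3_def U_def Sh_def by simp
  have eN0: "A_dwrad A S = Sup (insert 0 (g0 ` U))"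
    unfolding A_dwrad_def g0_def U_def by simp
  have SU: "aa.sn (S z) \<le> C" if "z \<in> U" for z using SbA[of z] zU[OF that] by simp
  have b1: "g1 z \<le> C * C + C" if "z \<in> U" for z
  proof -
    have "g1 z \<le> aa.sn (Sh (S z) + S z) * aa.sn z" unfolding g1_def by (rule aa.cs)
    also have "\<dots> = aa.sn (Sh (S z) + S z)" using zU[OF that] by simp
    also have "\<dots> \<le> aa.sn (Sh (S z)) + aa.sn (S z)" by (rule aa.sn_triangle)
    also have "\<dots> \<le> C * aa.sn (S z) + aa.sn (S z)" using ShbA by simp
    also have "\<dots> \<le> C * C + C" using SU[OF that] C0 by (simp add: add_mono mult_left_mono)
    finally show ?thesis .
  qed
  have g2eq: "cinner (A (Sh (S (S z)))) z = cinner (A (S (S z))) (S z)" for z by (rule KS)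
  have b2: "g2 z \<le> (C * C) * C" if "z \<in> U" for z
  proof -
    have "g2 z \<le> aa.sn (S (S z)) * aa.sn (S z)" unfolding g2_def g2eq by (rule aa.cs)
    also have "\<dots> \<le> (C * C) * C"
    proof (rule mult_mono)
      show "aa.sn (S (S z)) \<le> C * C" using SbA[of "S z"] SU[OF that] C0 by (meson mult_left_mono order_trans)
    qed (use SU[OF that] C0 aa.sn_nonneg in auto)
    finally show ?thesis .
  qed
  have b3: "g3 z \<le> C * (C * (C * C)) + C * C" if "z \<in> U" for z
  proof -
    have TU: "aa.sn (Sh (S z)) \<le> C * C" using ShbA[of "S z"] SU[OF that] C0 by (meson mult_left_mono order_trans)
    have "g3 z \<le> aa.sn (Sh (S (Sh (S z)))) + aa.sn (Sh (S z))" unfolding g3_def an by (rule aa.sn_triangle)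
    also have "aa.sn (Sh (S (Sh (S z)))) \<le> C * (C * (C * C))"
    proof -
      have "aa.sn (Sh (S (Sh (S z)))) \<le> C * aa.sn (S (Sh (S z)))" by (rule ShbA)
      also have "\<dots> \<le> C * (C * aa.sn (Sh (S z)))" using SbA C0 by (intro mult_left_mono) auto
      also have "\<dots> \<le> C * (C * (C * C))" using TU C0 by (intro mult_left_mono) auto
      finally show ?thesis .
    qed
    finally show ?thesis using TU by simp
  qed
  have B1: "\<forall>z\<in>U. g1 z \<le> C * C + C" using b1 by blast
  have B2: "\<forall>z\<in>U. g2 z \<le> (C * C) * C" using b2 by blast
  have B3: "\<forall>z\<in>U. g3 z \<le> C * (C * (C * C)) + C * C" using b3 by blast
  have s1: "\<And>z. z \<in> U \<Longrightarrow> g1 z \<le> N1" "0 \<le> N1"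
    unfolding N1_def by (rule sup_up[OF B1], assumption, rule sup_nn[OF B1])
  have s2: "\<And>z. z \<in> U \<Longrightarrow> g2 z \<le> N2" "0 \<le> N2"
    unfolding N2_def by (rule sup_up[OF B2], assumption, rule sup_nn[OF B2])
  have s3: "\<And>z. z \<in> U \<Longrightarrow> g3 z \<le> N3" "0 \<le> N3"
    unfolding N3_def by (rule sup_up[OF B3], assumption, rule sup_nn[OF B3])
  define M where "M = max 1 (cmod (\<alpha> - 1))"
  have M0: "M \<ge> 0" unfolding M_def by simp
  have al: "cmod \<alpha> > 0" using assms(3) by simp
  define RHS where "RHS = N1\<^sup>2 + 2 / cmod \<alpha> * N2 + M / cmod \<alpha> * N3"
  have RHS0: "RHS \<ge> 0" unfolding RHS_def using s1(2) s2(2) s3(2) M0 al by simp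
  have pz: "(g0 z)\<^sup>2 \<le> RHS" if zu: "z \<in> U" for z
  proof -
    define s where "s = cinner (A (S z)) z"
    define b where "b = Re (cinner (A (S z)) (S z))"
    have b0: "b \<ge> 0" unfolding b_def by (rule aa.pos)
    have bsn: "b = (aa.sn (S z))\<^sup>2" unfolding b_def aa.sn_sq ..
    have bT: "cinner (A (Sh (S z))) z = complex_of_real b"
      unfolding KS b_def by (rule aa.self_real)
    have e1: "cinner (A (Sh (S z) + S z)) z = complex_of_real b + s"
      unfolding aa.add_left bT s_def ..
    have g0sq: "(g0 z)\<^sup>2 = (cmod s)\<^sup>2 + b\<^sup>2"
      unfolding g0_def s_def an bsn by (simp add: power_mult[symmetric] mult.commute[of 2 2])
    have cm: "(cmod (complex_of_real b + s))\<^sup>2 = b\<^sup>2 + 2 * b * Re s + (cmod s)\<^sup>2"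
      unfolding cmod_power2 by (simp add: power2_eq_square algebra_simps)
    have g1z: "g1 z = cmod (complex_of_real b + s)" unfolding g1_def e1 ..
    have "(g1 z)\<^sup>2 \<le> N1\<^sup>2" using s1(1)[OF zu] by (intro power_mono) (auto simp: g1_def)
    then have step1: "(g0 z)\<^sup>2 \<le> N1\<^sup>2 + 2 * (b * cmod s)"
    proof -
      have "- Re s \<le> cmod s" using complex_Re_le_cmod[of "-s"] by simp
      then have h: "- (b * Re s) \<le> b * cmod s" using mult_left_mono[of "- Re s" "cmod s" b] b0 by simp
      have "(g1 z)\<^sup>2 = b\<^sup>2 + 2 * (b * Re s) + (cmod s)\<^sup>2" using g1z cm by simp
      then show ?thesis using g0sq h \<open>(g1 z)\<^sup>2 \<le> N1\<^sup>2\<close> by linarith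
    qed
    have ez: "Re (cinner (A z) z) = 1" using zU[OF zu] aa.sn_sq[of z] by simp
    have buz: "cmod (cinner (A (S z)) z * cinner (A z) (Sh (S z)))
       \<le> (M * aa.sn (S z) * aa.sn (Sh (S z)) + cmod (cinner (A (S z)) (Sh (S z)))) / cmod \<alpha>"
      unfolding M_def by (rule aa.buzano[OF ez assms(3)])
    have l: "cinner (A z) (Sh (S z)) = complex_of_real b"
      using aa.herm[of z "Sh (S z)"] bT by simp
    have lhs: "cmod (cinner (A (S z)) z * cinner (A z) (Sh (S z))) = b * cmod s"
      unfolding l s_def[symmetric] using b0 by (simp add: norm_mult)
    have r2: "cmod (cinner (A (S z)) (Sh (S z))) = g2 z"
    proof -
      have "cinner (A (S z)) (Sh (S z)) = cnj (cinner (A (Sh (S z))) (S z))" by (rule aa.herm)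
      also have "cinner (A (Sh (S z))) (S z) = cinner (A (S z)) (S (S z))" by (rule KS)
      also have "cnj (cinner (A (S z)) (S (S z))) = cinner (A (S (S z))) (S z)" by (rule aa.herm[symmetric])
      finally show ?thesis unfolding g2_def g2eq by simp
    qed
    have W: "Re (cinner (A (Sh (S (Sh (S z))) + Sh (S z))) z) = (aa.sn (Sh (S z)))\<^sup>2 + (aa.sn (S z))\<^sup>2"
    proof -
      have "cinner (A (Sh (S (Sh (S z))))) z = cinner (A (S (Sh (S z)))) (S z)" by (rule KS)
      also have "\<dots> = cnj (cinner (A (S z)) (S (Sh (S z))))" by (rule aa.herm)
      also have "cinner (A (S z)) (S (Sh (S z))) = cinner (A (Sh (S z))) (Sh (S z))" by (rule KS[symmetric])
      finally have "Re (cinner (A (Sh (S (Sh (S z))))) z) = (aa.sn (Sh (S z)))\<^sup>2"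
        unfolding aa.sn_sq by simp
      then show ?thesis unfolding aa.add_left using bT bsn by simp
    qed
    have W2: "(aa.sn (Sh (S z)))\<^sup>2 + (aa.sn (S z))\<^sup>2 \<le> N3"
    proof -
      have "(aa.sn (Sh (S z)))\<^sup>2 + (aa.sn (S z))\<^sup>2 \<le> cmod (cinner (A (Sh (S (Sh (S z))) + Sh (S z))) z)"
        unfolding W[symmetric] by (rule complex_Re_le_cmod)
      also have "\<dots> \<le> aa.sn (Sh (S (Sh (S z))) + Sh (S z)) * aa.sn z" by (rule aa.cs)
      also have "\<dots> = g3 z" unfolding g3_def an zU[OF zu] by simp
      also have "\<dots> \<le> N3" by (rule s3(1)[OF zu])
      finally show ?thesis .
    qed
    have amgm: "2 * (aa.sn (S z) * aa.sn (Sh (S z))) \<le> (aa.sn (Sh (S z)))\<^sup>2 + (aa.sn (S z))\<^sup>2"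
      using sum_squares_bound[of "aa.sn (S z)" "aa.sn (Sh (S z))"] by (simp add: algebra_simps)
    have bb: "b * cmod s \<le> (M * aa.sn (S z) * aa.sn (Sh (S z)) + g2 z) / cmod \<alpha>"
      using buz lhs r2 by simp
    have "2 * (b * cmod s) \<le> 2 * ((M * aa.sn (S z) * aa.sn (Sh (S z)) + g2 z) / cmod \<alpha>)"
      using bb by linarith
    also have "\<dots> = (M * (2 * (aa.sn (S z) * aa.sn (Sh (S z)))) + 2 * g2 z) / cmod \<alpha>"
      by (simp add: algebra_simps add_divide_distrib)
    also have "\<dots> \<le> (M * N3 + 2 * N2) / cmod \<alpha>"
    proof (rule divide_right_mono)
      have "M * (2 * (aa.sn (S z) * aa.sn (Sh (S z)))) \<le> M * N3"
        using amgm W2 M0 by (intro mult_left_mono) auto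
      moreover have "2 * g2 z \<le> 2 * N2" using s2(1)[OF zu] by simp
      ultimately show "M * (2 * (aa.sn (S z) * aa.sn (Sh (S z)))) + 2 * g2 z \<le> M * N3 + 2 * N2" by simp
    qed (use al in simp)
    also have "\<dots> = 2 / cmod \<alpha> * N2 + M / cmod \<alpha> * N3" by (simp add: add_divide_distrib)
    finally show ?thesis using step1 unfolding RHS_def by simp
  qed
  have g0le: "g0 z \<le> sqrt RHS" if "z \<in> U" for z
    using pz[OF that] unfolding g0_def by simp
  have "Sup (insert 0 (g0 ` U)) \<le> sqrt RHS"
    using g0le RHS0 by (intro cSup_least) auto
  moreover have "0 \<le> Sup (insert 0 (g0 ` U))"
    using g0le by (intro sup_nn[of U g0 "sqrt RHS"]) blast
  ultimately have "(Sup (insert 0 (g0 ` U)))\<^sup>2 \<le> RHS"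
    using RHS0 by (metis power_mono real_sqrt_pow2)
  then show ?thesis unfolding eN0 eN1 eN2 eN3 RHS_def M_def by simp
qed


end
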